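(* Let $X$ be a Banach space, $T$ a nonempty index set, and $f_t:X\to\mathbb{R}\cup\{+\infty\}$ $(t\in T)$ functions that are lower semicontinuous with respect to the weak topology of $X$. Suppose that either all $f_t$ $(t\in T)$ are nonnegative, or $T$ is finite. Then the collection $\{f_t\}_{t\in T}$ is uniformly lower semicontinuous on every weakly compact subset $U$ of $X$, i.e., $\inf_{x\in U}\big(\overline{\sum_{t\in T}}f_t\big)(x)\le \Lambda_U(\{f_t\}_{t\in T})$.
   Context: Let $\mathcal{F}(T)$ be the family of finite subsets of $T$, directed by inclusion. For a net $\{\alpha_S\}_{S\in\mathcal{F}(T)}\subset[-\infty,+\infty]$: $\limsup_{S\uparrow T,|S|<\infty}\alpha_S:=\inf_{S_0\in\mathcal{F}(T)}\sup_{S\in\mathcal{F}(T),S_0\subset S}\alpha_S$ and $\liminf_{S\uparrow T,|S|<\infty}\alpha_S:=\sup_{S_0\in\mathcal{F}(T)}\inf_{S\in\mathcal{F}(T),S_0\subset S}\alpha_S$. The infinite sum is $\big(\overline{\sum_{t\in T}} f_t\big)(x):=\limsup_{S\uparrow T,|S|<\infty}\sum_{t\in S}f_t(x)$. For $U\subset X$, the uniform infimum is $\Lambda_U(\{f_t\}_{t\in T}):=\liminf_{S\uparrow T,|S|<\infty}\ \liminf_{\operatorname{diam}\{x_t\}_{t\in S}\to 0,\ x_t\in U\,(t\in S)}\ \sum_{t\in S}f_t(x_t)$, where the inner lower limit equals $\lim_{\delta\downarrow0}\inf\{\sum_{t\in S}f_t(x_t): x_t\in U\ (t\in S),\ \operatorname{diam}\{x_t\}_{t\in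 S}<\delta\}$ and $\operatorname{diam} A=\sup_{a,b\in A}\|a-b\|$. The collection is called uniformly lower semicontinuous on $U$ if $\inf_U\overline{\sum_{t\in T}}f_t\le\Lambda_U(\{f_t\}_{t\in T})$. Convention: $\inf\emptyset=+\infty$. *)

theory Defs
  imports "HOL-Analysis.Analysis"
begin

definition weak_topology :: "'a::real_normed_vector topology" where
  "weak_topology = topology_generated_by
     {{x. l x \<in> V} | (l :: 'a \<Rightarrow> real) V. bounded_linear l \<and> open V}"

definition lsc_wrt :: "'a topology \<Rightarrow> ('a \<Rightarrow> ereal) \<Rightarrow> bool" where
  "lsc_wrt tau g \<longleftrightarrow> (\<forall>c. openin tau {x \<in> topspace tau. c < g x})"

text \<open>Upper / lower limits of a net indexed by finite subsets of T, directed by inclusion.\<close>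
definition fin_limsup :: "'b set \<Rightarrow> ('b set \<Rightarrow> ereal) \<Rightarrow> ereal" where
  "fin_limsup T \<alpha> = (INF S0 \<in> {S. finite S \<and> S \<subseteq> T}.
      SUP S \<in> {S. finite S \<and> S \<subseteq> T \<and> S0 \<subseteq> S}. \<alpha> S)"

definition fin_liminf :: "'b set \<Rightarrow> ('b set \<Rightarrow> ereal) \<Rightarrow> ereal" where
  "fin_liminf T \<alpha> = (SUP S0 \<in> {S. finite S \<and> S \<subseteq> T}.
      INF S \<in> {S. finite S \<and> S \<subseteq> T \<and> S0 \<subseteq> S}. \<alpha> S)"

definition upper_sum :: "'b set \<Rightarrow> ('b \<Rightarrow> 'a \<Rightarrow> ereal) \<Rightarrow> 'a \<Rightarrow> ereal" where
  "upper_sum T f x = fin_limsup T (\<lambda>S. \<Sum>t\<in>S. f t x)"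

text \<open>Inner lower limit as diam of the points tends to 0:
  lim_{delta -> 0+} inf {sum_{t in S} f_t(x_t) : x_t in U, diam {x_t} < delta}.
  The infimum is monotone in delta, so the limit is the supremum over delta > 0.\<close>
definition diam_liminf :: "'a::real_normed_vector set \<Rightarrow> 'b set \<Rightarrow> ('b \<Rightarrow> 'a \<Rightarrow> ereal) \<Rightarrow> ereal" where
  "diam_liminf U S f = (SUP \<delta> \<in> {(0::real)<..}.
      INF xs \<in> {xs :: 'b \<Rightarrow> 'a. (\<forall>t\<in>S. xs t \<in> U) \<and> diameter (xs ` S) < \<delta>}.
        \<Sum>t\<in>S. f t (xs t))"

definition uniform_inf :: "'a::real_normed_vector set \<Rightarrow> 'b set \<Rightarrow> ('b \<Rightarrow> 'a \<Rightarrow> ereal) \<Rightarrow> ereal" where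
  "uniform_inf U T f = fin_liminf T (\<lambda>S. diam_liminf U S f)"

definition uniformly_lsc_on :: "'a::real_normed_vector set \<Rightarrow> 'b set \<Rightarrow> ('b \<Rightarrow> 'a \<Rightarrow> ereal) \<Rightarrow> bool" where
  "uniformly_lsc_on U T f \<longleftrightarrow> (INF x\<in>U. upper_sum T f x) \<le> uniform_inf U T f"

end

theory Submission
  imports Defs
begin

lemma weak_topspace: "topspace (weak_topology :: 'a::real_normed_vector topology) = UNIV"
proof -
  have "(UNIV::'a set) \<in> {{x. l x \<in> V} | (l :: 'a \<Rightarrow> real) V. bounded_linear l \<and> open V}"
    by (rule CollectI, rule exI[of _ "\<lambda>x. 0"], rule exI[of _ UNIV]) (auto intro: bounded_linear_zero)
  then show ?thesis unfolding weak_topology_def topology_generated_by_topspace by blast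
qed

lemma weak_unif_open:
  fixes W :: "'a::real_normed_vector set"
  assumes "openin weak_topology W"
  shows "\<forall>x\<in>W. \<exists>W' e. openin weak_topology W' \<and> x \<in> W' \<and> e > 0 \<and>
            (\<forall>y\<in>W'. \<forall>z. norm (z - y) < e \<longrightarrow> z \<in> W)"
proof -
  let ?B = "{{x. l x \<in> V} | (l :: 'a \<Rightarrow> real) V. bounded_linear l \<and> open V}"
  have "generate_topology_on ?B W"
    using assms unfolding weak_topology_def by (rule openin_topology_generated_by)
  then show ?thesis
  proof (induction rule: generate_topology_on.induct)
    case Empty
    then show ?case by simp
  next
    case (Int a b)
    show ?case
    proof
      fix x assume x: "x \<in> a \<inter> b"
      have "\<exists>W' e. openin weak_topology W' \<and> x \<in> W' \<and> e > 0 \<and>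
            (\<forall>y\<in>W'. \<forall>z. norm (z - y) < e \<longrightarrow> z \<in> a)"
        using x by (intro bspec[OF Int.IH(1)]) simp
      then obtain Wa ea where A: "openin weak_topology Wa" "x \<in> Wa" "ea > 0"
            "\<forall>y\<in>Wa. \<forall>z. norm (z - y) < ea \<longrightarrow> z \<in> a" by blast
      have "\<exists>W' e. openin weak_topology W' \<and> x \<in> W' \<and> e > 0 \<and>
            (\<forall>y\<in>W'. \<forall>z. norm (z - y) < e \<longrightarrow> z \<in> b)"
        using x by (intro bspec[OF Int.IH(2)]) simp
      then obtain Wb eb where B: "openin weak_topology Wb" "x \<in> Wb" "eb > 0"
            "\<forall>y\<in>Wb. \<forall>z. norm (z - y) < eb \<longrightarrow> z \<in> b" by blast
      show "\<exists>W' e. openin weak_topology W' \<and> x \<in> W' \<and> e > 0 \<and>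
            (\<forall>y\<in>W'. \<forall>z. norm (z - y) < e \<longrightarrow> z \<in> a \<inter> b)"
      proof (intro exI conjI)
        show "openin weak_topology (Wa \<inter> Wb)" using A(1) B(1) by (rule openin_Int)
        show "x \<in> Wa \<inter> Wb" using A(2) B(2) by blast
        show "min ea eb > 0" using A(3) B(3) by simp
        show "\<forall>y\<in>Wa \<inter> Wb. \<forall>z. norm (z - y) < min ea eb \<longrightarrow> z \<in> a \<inter> b"
        proof (intro ballI allI impI)
          fix y z assume y: "y \<in> Wa \<inter> Wb" and z: "norm (z - y) < min ea eb"
          have za: "norm (z - y) < ea" and zb: "norm (z - y) < eb" using z by simp_all
          have ya: "y \<in> Wa" and yb: "y \<in> Wb" using y by simp_all
          have "z \<in> a" by (rule A(4)[rule_format, OF ya za])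
          moreover have "z \<in> b" by (rule B(4)[rule_format, OF yb zb])
          ultimately show "z \<in> a \<inter> b" by blast
        qed
      qed
    qed
  next
    case (UN K)
    show ?case
    proof
      fix x assume "x \<in> \<Union>K"
      then obtain k where kK: "k \<in> K" and xk: "x \<in> k" by blast
      have "\<exists>W' e. openin weak_topology W' \<and> x \<in> W' \<and> e > 0 \<and>
            (\<forall>y\<in>W'. \<forall>z. norm (z - y) < e \<longrightarrow> z \<in> k)"
        by (rule bspec[OF UN.IH[OF kK] xk])
      then obtain W' e where W: "openin weak_topology W'" "x \<in> W'" "e > 0"
            "\<forall>y\<in>W'. \<forall>z. norm (z - y) < e \<longrightarrow> z \<in> k"
        by blast
      show "\<exists>W' e. openin weak_topology W' \<and> x \<in> W' \<and> e > 0 \<and>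
            (\<forall>y\<in>W'. \<forall>z. norm (z - y) < e \<longrightarrow> z \<in> \<Union>K)"
      proof (intro exI conjI)
        show "openin weak_topology W'" "x \<in> W'" "e > 0" by (fact W)+
        show "\<forall>y\<in>W'. \<forall>z. norm (z - y) < e \<longrightarrow> z \<in> \<Union>K"
        proof (intro ballI allI impI)
          fix y z assume "y \<in> W'" "norm (z - y) < e"
          then have "z \<in> k" by (rule W(4)[rule_format])
          then show "z \<in> \<Union>K" using kK by (rule UnionI[rotated])
        qed
      qed
    qed
  next
    case (Basis s)
    then have "\<exists>(l::'a\<Rightarrow>real) V. s = {x. l x \<in> V} \<and> bounded_linear l \<and> open V" by simp
    then obtain l and V :: "real set" where s: "s = {x. l x \<in> V}" and l: "bounded_linear l" and V: "open V" by blast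
    show ?case
    proof
      fix x assume "x \<in> s"
      then have "l x \<in> V" using s by simp
      then obtain r where r: "r > 0" "ball (l x) r \<subseteq> V" using V open_contains_ball by blast
      obtain K where K: "K > 0" "\<And>z. norm (l z) \<le> norm z * K"
        using bounded_linear.pos_bounded[OF l] by blast
      define W' where "W' = {y. l y \<in> ball (l x) (r/2)}"
      have "W' \<in> ?B" unfolding W'_def using l by blast
      then have o: "openin weak_topology W'" unfolding weak_topology_def by (rule topology_generated_by_Basis)
      have "\<forall>y\<in>W'. \<forall>z. norm (z - y) < r / (2*K) \<longrightarrow> z \<in> s"
      proof (intro ballI allI impI)
        fix y z assume y: "y \<in> W'" and z: "norm (z - y) < r / (2*K)"
        have "norm (l (z - y)) \<le> norm (z - y) * K" by (rule K(2))
        also have "\<dots> < r/(2*K) * K" using z K by (intro mult_strict_right_mono) auto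
        also have "\<dots> = r/2" using K by simp
        finally have "norm (l z - l y) < r/2" using linear_diff[OF bounded_linear.linear[OF l]] by simp
        moreover have "dist (l x) (l y) < r/2" using y unfolding W'_def by simp
        moreover have "dist (l x) (l z) \<le> dist (l x) (l y) + dist (l y) (l z)" by (rule dist_triangle)
        moreover have "dist (l y) (l z) = norm (l z - l y)" by (simp add: dist_norm norm_minus_commute)
        ultimately have "dist (l x) (l z) < r" by linarith
        then show "z \<in> s" using r s by auto
      qed
      moreover have "x \<in> W'" unfolding W'_def using r by simp
      ultimately show "\<exists>W' e. openin weak_topology W' \<and> x \<in> W' \<and> e > 0 \<and>
            (\<forall>y\<in>W'. \<forall>z. norm (z - y) < e \<longrightarrow> z \<in> s)"
        using o r K by (intro exI[of _ W'] exI[of _ "r/(2*K)"]) auto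
    qed
  qed
qed


lemma sum_not_minf:
  fixes a :: "'b \<Rightarrow> ereal"
  assumes "finite S" "\<forall>t\<in>S. a t \<noteq> -\<infinity>"
  shows "sum a S \<noteq> -\<infinity>"
  using assms
proof (induction S rule: finite_induct)
  case empty
  then show ?case by simp
next
  case (insert s S)
  then have "a s \<noteq> -\<infinity>" "sum a S \<noteq> -\<infinity>" by simp_all
  then have "a s + sum a S \<noteq> -\<infinity>" by (cases "a s"; cases "sum a S") auto
  then show ?case using insert.hyps by simp
qed

lemma split2:
  fixes A B :: ereal and c :: real
  assumes "A \<noteq> -\<infinity>" "B \<noteq> -\<infinity>" "ereal c < A + B"
  shows "\<exists>c1 c2. ereal c1 < A \<and> ereal c2 < B \<and> c < c1 + c2"
proof (cases A)
  case (real a)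
  show ?thesis
  proof (cases B)
    case (real b)
    with \<open>A = ereal a\<close> assms(3) have "c < a + b" by simp
    then have "ereal (a - (a+b-c)/3) < A \<and> ereal (b - (a+b-c)/3) < B \<and> c < (a - (a+b-c)/3) + (b - (a+b-c)/3)"
      using \<open>A = ereal a\<close> \<open>B = ereal b\<close> by (auto simp: field_simps)
    then show ?thesis by blast
  next
    case PInf
    then have "ereal (a - 1) < A \<and> ereal (c - a + 2) < B \<and> c < (a - 1) + (c - a + 2)"
      using \<open>A = ereal a\<close> by auto
    then show ?thesis by blast
  next
    case MInf
    then show ?thesis using assms by simp
  qed
next
  case PInf
  show ?thesis
  proof (cases B)
    case (real b)
    then have "ereal (c - b + 2) < A \<and> ereal (b - 1) < B \<and> c < (c - b + 2) + (b - 1)"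
      using \<open>A = \<infinity>\<close> by auto
    then show ?thesis by blast
  next
    case PInf
    then have "ereal c < A \<and> ereal 1 < B \<and> c < c + 1"
      using \<open>A = \<infinity>\<close> by auto
    then show ?thesis by blast
  next
    case MInf
    then show ?thesis using assms by simp
  qed
next
  case MInf
  then show ?thesis using assms by simp
qed

lemma split_sum:
  fixes a :: "'b \<Rightarrow> ereal"
  assumes "finite S" "\<forall>t\<in>S. a t \<noteq> -\<infinity>" "ereal c < sum a S"
  shows "\<exists>b. (\<forall>t\<in>S. ereal (b t) < a t) \<and> c < sum b S"
  using assms
proof (induction S arbitrary: c rule: finite_induct)
  case empty
  then show ?case by (intro exI[of _ "\<lambda>_. 0"]) simp
next
  case (insert s S)
  have as: "a s \<noteq> -\<infinity>" and aS: "\<forall>t\<in>S. a t \<noteq> -\<infinity>" using insert.prems by simp_all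
  have sS: "sum a S \<noteq> -\<infinity>" using sum_not_minf[OF insert.hyps(1) aS] .
  have "ereal c < a s + sum a S" using insert.prems(2) insert.hyps by simp
  then obtain c1 c2 where c12: "ereal c1 < a s" "ereal c2 < sum a S" "c < c1 + c2"
    using split2[OF as sS] by blast
  obtain b where b: "\<forall>t\<in>S. ereal (b t) < a t" "c2 < sum b S"
    using insert.IH[OF aS c12(2)] by blast
  define b' where "b' = b(s := c1)"
  have "sum b' S = sum b S" unfolding b'_def using insert.hyps(2) by (intro sum.cong) auto
  then have "sum b' (insert s S) = c1 + sum b S" using insert.hyps by (simp add: b'_def)
  moreover have "\<forall>t\<in>insert s S. ereal (b' t) < a t" using b(1) c12(1) insert.hyps(2) by (auto simp: b'_def)
  ultimately show ?case using b(2) c12(3) by (intro exI[of _ b']) simp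
qed

lemma local_bound:
  fixes f :: "'b \<Rightarrow> 'a::real_normed_vector \<Rightarrow> ereal"
  assumes S: "finite S" and nm: "\<forall>t\<in>S. \<forall>x. f t x \<noteq> -\<infinity>"
    and lsc: "\<forall>t\<in>S. lsc_wrt weak_topology (f t)"
    and c: "ereal c < (\<Sum>t\<in>S. f t x)"
  shows "\<exists>W e. openin weak_topology W \<and> x \<in> W \<and> e > 0 \<and>
     (\<forall>y\<in>W. \<forall>zs. (\<forall>t\<in>S. norm (zs t - y) < e) \<longrightarrow> ereal c < (\<Sum>t\<in>S. f t (zs t)))"
proof -
  obtain b where b: "\<forall>t\<in>S. ereal (b t) < f t x" "c < sum b S"
    using split_sum[OF S _ c] nm by blast
  have "\<forall>t\<in>S. \<exists>W. \<exists>e. openin weak_topology W \<and> x \<in> W \<and> e > 0 \<and>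
            (\<forall>y\<in>W. \<forall>z. norm (z - y) < e \<longrightarrow> z \<in> {z. ereal (b t) < f t z})"
  proof
    fix t assume t: "t \<in> S"
    have "openin weak_topology {z \<in> topspace weak_topology. ereal (b t) < f t z}"
      using lsc t unfolding lsc_wrt_def by blast
    then have o: "openin weak_topology {z. ereal (b t) < f t z}" by (simp add: weak_topspace)
    have "x \<in> {z. ereal (b t) < f t z}" using b(1) t by simp
    then show "\<exists>W. \<exists>e. openin weak_topology W \<and> x \<in> W \<and> e > 0 \<and>
            (\<forall>y\<in>W. \<forall>z. norm (z - y) < e \<longrightarrow> z \<in> {z. ereal (b t) < f t z})"
      using weak_unif_open[OF o] by blast
  qed
  from bchoice[OF this] obtain Wf where "\<forall>t\<in>S. \<exists>e. openin weak_topology (Wf t) \<and> x \<in> Wf t \<and> e > 0 \<and>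
            (\<forall>y\<in>Wf t. \<forall>z. norm (z - y) < e \<longrightarrow> z \<in> {z. ereal (b t) < f t z})"
    by blast
  from bchoice[OF this] obtain ef where W: "\<forall>t\<in>S. openin weak_topology (Wf t) \<and> x \<in> Wf t \<and> ef t > 0 \<and>
            (\<forall>y\<in>Wf t. \<forall>z. norm (z - y) < ef t \<longrightarrow> z \<in> {z. ereal (b t) < f t z})"
    by blast
  define W' where "W' = (\<Inter>t\<in>S. Wf t) \<inter> topspace weak_topology"
  define e where "e = Min (insert 1 (ef ` S))"
  have oW: "openin weak_topology W'" unfolding W'_def using S W by (intro openin_INT) auto
  have xW: "x \<in> W'" unfolding W'_def using W by (auto simp: weak_topspace)
  have e0: "e > 0" unfolding e_def using S W by (subst Min_gr_iff) auto
  have ele: "\<And>t. t \<in> S \<Longrightarrow> e \<le> ef t" unfolding e_def using S by (intro Min_le) auto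
  have "\<forall>y\<in>W'. \<forall>zs. (\<forall>t\<in>S. norm (zs t - y) < e) \<longrightarrow> ereal c < (\<Sum>t\<in>S. f t (zs t))"
  proof (intro ballI allI impI)
    fix y zs assume y: "y \<in> W'" and zs: "\<forall>t\<in>S. norm (zs t - y) < e"
    have "\<forall>t\<in>S. ereal (b t) < f t (zs t)"
    proof
      fix t assume t: "t \<in> S"
      have "y \<in> Wf t" using y t unfolding W'_def by blast
      moreover have "norm (zs t - y) < ef t" using zs t ele[OF t] by force
      ultimately show "ereal (b t) < f t (zs t)" using W t by blast
    qed
    then have "(\<Sum>t\<in>S. ereal (b t)) \<le> (\<Sum>t\<in>S. f t (zs t))"
      by (intro sum_mono) (simp add: less_imp_le)
    moreover have "ereal c < (\<Sum>t\<in>S. ereal (b t))" using b(2) by simp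
    ultimately show "ereal c < (\<Sum>t\<in>S. f t (zs t))" by (rule less_le_trans[rotated])
  qed
  then show ?thesis using oW xW e0 by blast
qed


theorem proposition2p3:
  fixes T :: "'b set" and f :: "'b \<Rightarrow> 'a::banach \<Rightarrow> ereal" and U :: "'a set"
  assumes "T \<noteq> {}"
    and "\<forall>t\<in>T. \<forall>x. f t x \<noteq> -\<infinity>"
    and "\<forall>t\<in>T. lsc_wrt weak_topology (f t)"
    and "(\<forall>t\<in>T. \<forall>x. 0 \<le> f t x) \<or> finite T"
    and "compactin weak_topology U"
  shows "uniformly_lsc_on U T f"
proof -
  define m where "m = (INF x\<in>U. upper_sum T f x)"
  have key: "ereal c \<le> uniform_inf U T f" if cm: "ereal c < m" for c :: real
  proof -
    have step1: "\<forall>x\<in>U. \<exists>S. finite S \<and> S \<subseteq> T \<and> (finite T \<longrightarrow> S = T) \<and> ereal c < (\<Sum>t\<in>S. f t x)"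
    proof
      fix x assume xU: "x \<in> U"
      have "m \<le> upper_sum T f x" unfolding m_def using xU by (rule INF_lower)
      then have cx: "ereal c < upper_sum T f x" using cm by (rule less_le_trans[rotated])
      show "\<exists>S. finite S \<and> S \<subseteq> T \<and> (finite T \<longrightarrow> S = T) \<and> ereal c < (\<Sum>t\<in>S. f t x)"
      proof (cases "finite T")
        case True
        have "upper_sum T f x \<le> (SUP S\<in>{S. finite S \<and> S \<subseteq> T \<and> T \<subseteq> S}. \<Sum>t\<in>S. f t x)"
          unfolding upper_sum_def fin_limsup_def using True by (intro INF_lower) simp
        also have "{S. finite S \<and> S \<subseteq> T \<and> T \<subseteq> S} = {T}" using True by auto
        finally have "upper_sum T f x \<le> (\<Sum>t\<in>T. f t x)" by simp
        then show ?thesis using cx True by (intro exI[of _ T]) auto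
      next
        case False
        have "upper_sum T f x \<le> (SUP S\<in>{S. finite S \<and> S \<subseteq> T \<and> {} \<subseteq> S}. \<Sum>t\<in>S. f t x)"
          unfolding upper_sum_def fin_limsup_def by (intro INF_lower) simp
        then have "ereal c < (SUP S\<in>{S. finite S \<and> S \<subseteq> T \<and> {} \<subseteq> S}. \<Sum>t\<in>S. f t x)"
          using cx by (rule order.strict_trans2[rotated])
        then obtain S where "S \<in> {S. finite S \<and> S \<subseteq> T \<and> {} \<subseteq> S}" "ereal c < (\<Sum>t\<in>S. f t x)"
          by (auto simp: less_SUP_iff)
        then show ?thesis using False by blast
      qed
    qed
    from bchoice[OF step1] obtain Sx where Sx: "\<forall>x\<in>U. finite (Sx x) \<and> Sx x \<subseteq> T \<and>
        (finite T \<longrightarrow> Sx x = T) \<and> ereal c < (\<Sum>t\<in>Sx x. f t x)" by blast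
    have step2: "\<forall>x\<in>U. \<exists>W. \<exists>e. openin weak_topology W \<and> x \<in> W \<and> e > 0 \<and>
     (\<forall>y\<in>W. \<forall>zs. (\<forall>t\<in>Sx x. norm (zs t - y) < e) \<longrightarrow> ereal c < (\<Sum>t\<in>Sx x. f t (zs t)))"
    proof
      fix x assume xU: "x \<in> U"
      have fin: "finite (Sx x)" and sub: "Sx x \<subseteq> T" and lt: "ereal c < (\<Sum>t\<in>Sx x. f t x)"
        using Sx xU by auto
      have nm: "\<forall>t\<in>Sx x. \<forall>x. f t x \<noteq> -\<infinity>" using assms(2) sub by blast
      have ls: "\<forall>t\<in>Sx x. lsc_wrt weak_topology (f t)" using assms(3) sub by blast
      show "\<exists>W. \<exists>e. openin weak_topology W \<and> x \<in> W \<and> e > 0 \<and>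
     (\<forall>y\<in>W. \<forall>zs. (\<forall>t\<in>Sx x. norm (zs t - y) < e) \<longrightarrow> ereal c < (\<Sum>t\<in>Sx x. f t (zs t)))"
        by (rule local_bound[OF fin nm ls lt])
    qed
    from bchoice[OF step2] obtain Wf where "\<forall>x\<in>U. \<exists>e. openin weak_topology (Wf x) \<and> x \<in> Wf x \<and> e > 0 \<and>
     (\<forall>y\<in>Wf x. \<forall>zs. (\<forall>t\<in>Sx x. norm (zs t - y) < e) \<longrightarrow> ereal c < (\<Sum>t\<in>Sx x. f t (zs t)))"
      by blast
    from bchoice[OF this] obtain ef where W: "\<forall>x\<in>U. openin weak_topology (Wf x) \<and> x \<in> Wf x \<and> ef x > 0 \<and>
     (\<forall>y\<in>Wf x. \<forall>zs. (\<forall>t\<in>Sx x. norm (zs t - y) < ef x) \<longrightarrow> ereal c < (\<Sum>t\<in>Sx x. f t (zs t)))"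
      by blast
    have cov: "\<forall>V\<in>Wf ` U. openin weak_topology V" using W by blast
    have cov2: "U \<subseteq> \<Union>(Wf ` U)" using W by blast
    obtain F where F: "finite F" "F \<subseteq> Wf ` U" "U \<subseteq> \<Union>F"
      using assms(5) cov cov2 unfolding compactin_def by meson
    obtain K where K: "K \<subseteq> U" "finite K" "F = Wf ` K"
      using finite_subset_image[OF F(1) F(2)] by blast
    obtain t0 where t0: "t0 \<in> T" using assms(1) by blast
    define S0 where "S0 = insert t0 (\<Union>x\<in>K. Sx x)"
    define \<delta> where "\<delta> = Min (insert 1 (ef ` K))"
    have S0fin: "finite S0" unfolding S0_def using K Sx by auto
    have S0T: "S0 \<subseteq> T" unfolding S0_def using K Sx t0 by auto
    have d0: "\<delta> > 0" unfolding \<delta>_def using K W by (subst Min_gr_iff) auto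
    have dle: "\<And>x. x \<in> K \<Longrightarrow> \<delta> \<le> ef x" unfolding \<delta>_def using K by (intro Min_le) auto
    have core: "ereal c \<le> (\<Sum>t\<in>S. f t (xs t))"
      if S: "finite S" "S \<subseteq> T" "S0 \<subseteq> S" and xs: "\<forall>t\<in>S. xs t \<in> U" "diameter (xs ` S) < \<delta>"
      for S xs
    proof -
      have t0S: "t0 \<in> S" using S(3) unfolding S0_def by blast
      define y where "y = xs t0"
      have "y \<in> U" unfolding y_def using xs t0S by blast
      then obtain x where xK: "x \<in> K" and yW: "y \<in> Wf x" using F(3) K(3) by blast
      have xU: "x \<in> U" using xK K(1) by blast
      have SxS: "Sx x \<subseteq> S" using S(3) xK unfolding S0_def by blast
      have bnd: "bounded (xs ` S)" using S(1) by (intro finite_imp_bounded) simp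
      have "\<forall>t\<in>Sx x. norm (xs t - y) < ef x"
      proof
        fix t assume t: "t \<in> Sx x"
        have "norm (xs t - y) = dist (xs t) (xs t0)" unfolding y_def by (simp add: dist_norm)
        also have "\<dots> \<le> diameter (xs ` S)"
          using bnd t SxS t0S by (intro diameter_bounded_bound) auto
        also have "\<dots> < \<delta>" by (rule xs(2))
        also have "\<dots> \<le> ef x" by (rule dle[OF xK])
        finally show "norm (xs t - y) < ef x" .
      qed
      then have lt: "ereal c < (\<Sum>t\<in>Sx x. f t (xs t))" using W xU yW by blast
      have "(\<Sum>t\<in>Sx x. f t (xs t)) \<le> (\<Sum>t\<in>S. f t (xs t))"
      proof (cases "finite T")
        case True
        then have "Sx x = T" using Sx xU by blast
        then have "S = Sx x" using SxS S(2) by blast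
        then show ?thesis by simp
      next
        case False
        then have nn: "\<forall>t\<in>T. \<forall>x. 0 \<le> f t x" using assms(4) by blast
        show ?thesis
        proof (rule sum_mono2[OF S(1) SxS])
          fix b assume "b \<in> S - Sx x"
          then show "0 \<le> f b (xs b)" using nn S(2) by blast
        qed
      qed
      with lt show ?thesis by simp
    qed
    have "ereal c \<le> (INF S\<in>{S. finite S \<and> S \<subseteq> T \<and> S0 \<subseteq> S}. diam_liminf U S f)"
    proof (rule INF_greatest)
      fix S assume "S \<in> {S. finite S \<and> S \<subseteq> T \<and> S0 \<subseteq> S}"
      then have S: "finite S" "S \<subseteq> T" "S0 \<subseteq> S" by auto
      have "ereal c \<le> (INF xs \<in> {xs. (\<forall>t\<in>S. xs t \<in> U) \<and> diameter (xs ` S) < \<delta>}. \<Sum>t\<in>S. f t (xs t))"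
        using core[OF S] by (intro INF_greatest) blast
      also have "\<dots> \<le> diam_liminf U S f"
        unfolding diam_liminf_def using d0
        by (intro SUP_upper2[where i=\<delta>]) auto
      finally show "ereal c \<le> diam_liminf U S f" .
    qed
    also have "\<dots> \<le> uniform_inf U T f"
      unfolding uniform_inf_def fin_liminf_def using S0fin S0T
      by (intro SUP_upper2[where i=S0]) auto
    finally show ?thesis .
  qed
  show ?thesis
    unfolding uniformly_lsc_on_def m_def[symmetric]
  proof (rule ccontr)
    assume "\<not> m \<le> uniform_inf U T f"
    then have "uniform_inf U T f < m" by simp
    then obtain c where "uniform_inf U T f < ereal c" "ereal c < m" using ereal_dense2 by blast
    with key show False by (meson leD)
  qed
qed

end
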